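(* Let $K$ be a circle of radius $1$ and centre $O$, and let $P$ be a point with $d=\mathrm{dist}(P,K)$ satisfying $0<d<1/2$. Let $Q\in K$ be such that the triangle $POQ$ is positively (counter-clockwise) oriented. (i) If $P$ is in the interior of $K$ and $|PQ|\ge 2\sqrt d$, then there is an angle $0<\alpha<\pi/2$ with $\sin\alpha<2\sqrt d$ such that the circle $K'$ obtained by rotating $K$ about $Q$ in the positive direction by angle $\alpha$ contains $P$. (ii) If $P$ is in the exterior of $K$ and $3\sqrt d\le |PQ|\le 2-d$, then there is an angle $0<\alpha<\pi/2$ with $\sin\alpha<2\sqrt d$ such that the circle $K'$ obtained by rotating $K$ about $Q$ in the negative direction by angle $\alpha$ contains $P$. Moreover, in both cases the distance between $O$ and the centre of $K'$ is less than $4\sqrt d$.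
   Context: $|AB|$ denotes the Euclidean distance between points $A,B$. The positive direction of rotation is counter-clockwise. *)

theory Defs
  imports "HOL-Analysis.Analysis"
begin

definition rot :: "complex \<Rightarrow> real \<Rightarrow> complex \<Rightarrow> complex" where
  "rot c t z = c + cis t * (z - c)"

text \<open>Triangle A B C is positively (counter-clockwise) oriented: positive signed area.\<close>
definition pos_oriented :: "complex \<Rightarrow> complex \<Rightarrow> complex \<Rightarrow> bool" where
  "pos_oriented A B C \<longleftrightarrow> Im (cnj (B - A) * (C - A)) > 0"

end

theory Submission
  imports Defs
begin

lemma trig_at:
  fixes q :: real
  shows "sin (2*arctan q) = 2*q/(1+q^2)" and "cos (2*arctan q) = (1-q^2)/(1+q^2)"
proof -
  have s: "sqrt (1+q^2)^2 = 1 + q^2" by (simp add: add_nonneg_nonneg)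
  have p: "sqrt (1+q^2) > 0" by (simp add: add_pos_nonneg)
  show "sin (2*arctan q) = 2*q/(1+q^2)"
    unfolding sin_double sin_arctan cos_arctan using s p
    by (simp add: field_simps power2_eq_square)
  show "cos (2*arctan q) = (1-q^2)/(1+q^2)"
    unfolding cos_double sin_arctan cos_arctan using s p
    by (simp add: field_simps power_divide)
qed

lemma cmod_diff_sq: "cmod (a - b)^2 = cmod a^2 + cmod b^2 - 2 * Re (cnj a * b)"
  by (simp only: cmod_power2) (simp add: power2_eq_square algebra_simps)

lemma rot_mem:
  assumes "cmod ((P - Q) - cis a * (Oc - Q)) = 1"
  shows "P \<in> rot Q a ` sphere Oc 1"
proof
  define k where "k = Q + cis (-a) * (P - Q)"
  have "rot Q a k = Q + (cis a * cis (-a)) * (P - Q)" by (simp add: rot_def k_def algebra_simps)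
  also have "cis a * cis (-a) = 1" by (simp add: cis_mult)
  finally show "P = rot Q a k" by simp
  have "k - Oc = cis (-a) * ((P - Q) - cis a * (Oc - Q))"
    by (simp add: k_def algebra_simps mult.assoc[symmetric] cis_mult)
  then have "cmod (k - Oc) = 1" using assms by (simp add: norm_mult)
  then show "k \<in> sphere Oc 1" by (simp add: dist_norm norm_minus_commute)
qed

lemma dist_rot:
  assumes "cmod (Oc - Q) = 1"
  shows "dist Oc (rot Q a Oc) ^2 = 2 - 2*cos a"
proof -
  have "Oc - rot Q a Oc = (1 - cis a) * (Oc - Q)" by (simp add: rot_def algebra_simps)
  then have "dist Oc (rot Q a Oc) = cmod (1 - cis a)" using assms by (simp add: dist_norm norm_mult)
  also have "cmod (1 - cis a)^2 = (1 - cos a)^2 + (sin a)^2" by (simp add: cmod_power2)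
  also have "... = 2 - 2*cos a" using sin_cos_squared_add[of a] by (simp add: power2_eq_square algebra_simps)
  finally show ?thesis .
qed

lemma infdist_sphere:
  fixes P Oc :: complex
  shows "infdist P (sphere Oc 1) = \<bar>dist P Oc - 1\<bar>"
proof (rule antisym)
  have "Oc + 1 \<in> sphere Oc 1" by (simp add: dist_norm)
  then have ne: "sphere Oc 1 \<noteq> {}" by blast
  show "\<bar>dist P Oc - 1\<bar> \<le> infdist P (sphere Oc 1)"
    unfolding infdist_notempty[OF ne]
  proof (rule cINF_greatest)
    show "sphere Oc 1 \<noteq> {}" by simp
    fix k assume "k \<in> sphere Oc 1"
    then have "dist Oc k = 1" by simp
    then show "\<bar>dist P Oc - 1\<bar> \<le> dist P k"
      using dist_triangle[of P Oc k] dist_triangle[of Oc k P] dist_commute[of P k] dist_commute[of P Oc] dist_commute[of k Oc]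
      by linarith
  qed
  show "infdist P (sphere Oc 1) \<le> \<bar>dist P Oc - 1\<bar>"
  proof (cases "P = Oc")
    case True
    have "Oc + 1 \<in> sphere Oc 1" by (simp add: dist_norm)
    then show ?thesis using infdist_le[of "Oc + 1" "sphere Oc 1" P] True by (simp add: dist_norm)
  next
    case False
    define r where "r = cmod (P - Oc)"
    have r0: "r > 0" using False by (simp add: r_def)
    define k where "k = Oc + (P - Oc) / complex_of_real r"
    have "dist Oc k = 1" using r0 by (simp add: k_def dist_norm r_def norm_divide)
    then have ks: "k \<in> sphere Oc 1" by simp
    have "P - k = (P - Oc) * complex_of_real (1 - 1/r)" using r0
      by (simp add: k_def field_simps)
    moreover have "cmod (complex_of_real (1 - 1/r)) = \<bar>1 - 1/r\<bar>" by (simp only: norm_of_real)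
    ultimately have "dist P k = r * \<bar>1 - 1/r\<bar>" by (simp only: dist_norm norm_mult r_def)
    also have "... = \<bar>r - 1\<bar>" using r0 by (simp add: abs_mult[symmetric] field_simps)
    finally show ?thesis using infdist_le[OF ks, of P] by (simp add: dist_norm r_def)
  qed
qed

lemma core_i:
  fixes d u x y :: real
  assumes d0: "0 < d" and d1: "d < 1/2" and ua: "4*d \<le> u"
    and xd: "x = u/2 + (d - d^2/2)" and xy: "x^2 + y^2 = u" and y0: "y > 0"
  shows "u*(1+d) - 2*(x*(1-d) - y*(2* sqrt d)) \<ge> 0"
proof -
  define b where "b = (1 - d/2)*(1-d)"
  define e where "e = d - d^2/2"
  have lhs: "u*(1+d) - 2*(x*(1-d) - y*(2* sqrt d)) = 2*(u*d - d*b) + 4*(y* sqrt d)"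
    by (simp add: xd b_def field_simps power2_eq_square)
  show ?thesis
  proof (cases "b \<le> u")
    case True
    then have "u*d - d*b \<ge> 0" using d0 by (simp add: mult_left_mono algebra_simps)
    moreover have "4*(y * sqrt d) \<ge> 0" using y0 d0 by simp
    ultimately show ?thesis unfolding lhs by (intro add_nonneg_nonneg) auto
  next
    case False
    define Qf where "Qf = (\<lambda>v::real. 4*d*(v - (v/2 + e)^2) - d^2*(b-v)^2)"
    have id: "(b - 4*d) * Qf u = Qf (4*d) * (b - u) + Qf b * (u - 4*d) + (d + d^2)*(b - 4*d)*(u - 4*d)*(b - u)"
      by (simp add: Qf_def field_simps power2_eq_square)
    have dd: "d^2 < d/2" using d0 d1 by (simp add: power2_eq_square)
    have bexp: "b = 1 - 3/2*d + d^2/2" unfolding b_def by (simp add: field_simps power2_eq_square)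
    have dsm: "d < 1/5" using False ua dd bexp by linarith
    have Qa: "Qf (4*d) \<ge> 0"
    proof -
      have "Qf (4*d) = d^2 * (15 - 25*d - 77/4*d^2 + 9/2*d^3 - 1/4*d^4)"
        by (simp add: Qf_def e_def b_def field_simps power2_eq_square power3_eq_cube power4_eq_xxxx)
      moreover have "15 - 25*d - 77/4*d^2 + 9/2*d^3 - 1/4*d^4 \<ge> 0"
      proof -
        have "d^2 \<le> d/5" using d0 dsm by (simp add: power2_eq_square)
        moreover have "d^4 \<le> d^3" using d0 dsm by (simp add: power4_eq_xxxx power3_eq_cube mult_left_le)
        moreover have "d^3 \<ge> 0" using d0 by simp
        ultimately show ?thesis using dsm d0 by linarith
      qed
      ultimately show ?thesis by simp
    qed
    have Qb: "Qf b \<ge> 0"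
    proof -
      have "Qf b = 4*d*(1-d/2)*(3 - 11/2*d + d^3/2)/4"
        by (simp add: Qf_def e_def b_def field_simps power2_eq_square power3_eq_cube)
      moreover have "3 - 11/2*d + d^3/2 \<ge> 0" using d0 d1 by (simp add: power3_eq_cube)
      ultimately show ?thesis using d0 d1 by simp
    qed
    have bu: "b - u > 0" and ua': "u - 4*d \<ge> 0" using False ua by auto
    have "(b - 4*d) * Qf u \<ge> 0" unfolding id using Qa Qb bu ua' d0
      by (intro add_nonneg_nonneg mult_nonneg_nonneg) auto
    then have Qu: "Qf u \<ge> 0" using bu ua' by (simp add: zero_le_mult_iff)
    have yy: "y^2 = u - x^2" using xy by simp
    have "(2*y* sqrt d)^2 = 4*d*y^2" using d0 by (simp add: power_mult_distrib)
    also have "... \<ge> (d*b - u*d)^2" using Qu unfolding Qf_def yy xd e_def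
      by (simp add: field_simps power2_eq_square)
    finally have "(d*b - u*d)^2 \<le> (2*y* sqrt d)^2" .
    moreover have nn: "0 \<le> 2*y* sqrt d" using y0 d0 by simp
    ultimately have "d*b - u*d \<le> 2*y* sqrt d"
      by (rule power2_le_imp_le)
    then have "d*b - u*d \<le> 2*(y* sqrt d)" by simp
    then show ?thesis unfolding lhs by (smt (verit))
  qed
qed
lemma core_ii:
  fixes d u x y :: real
  assumes d0: "0 < d" and d1: "d < 1/2" and ua: "9*d \<le> u" and ub: "u \<le> (2-d)^2"
    and xd: "x = u/2 - (d + d^2/2)" and xy: "x^2 + y^2 = u" and y0: "y > 0"
  shows "u*(1+d) - 2*(x*(1-d) + y*(2 * sqrt d)) \<le> 0"
proof -
  define b where "b = (2-d)^2"
  define e where "e = d + d^2/2"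
  have lhs: "u*(1+d) - 2*(x*(1-d) + y*(2 * sqrt d)) = 2*(u*d + e*(1-d)) - 4*(y * sqrt d)"
    by (simp add: xd e_def field_simps power2_eq_square)
  define Qf where "Qf = (\<lambda>v::real. 4*d*(v - (v/2 - e)^2) - (v * d + e*(1-d))^2)"
  have id: "(b - 9*d) * Qf u = Qf (9*d) * (b - u) + Qf b * (u - 9*d) + (d + d^2)*(b - 9*d)*(u - 9*d)*(b - u)"
    by (simp add: Qf_def field_simps power2_eq_square)
  have dsm: "d \<le> 1/3"
  proof (rule ccontr)
    assume "\<not> d \<le> 1/3"
    then have "(2-d)^2 < (5/3)^2" using d1 by (intro power_strict_mono) auto
    then show False using ua ub \<open>\<not> d \<le> 1/3\<close> by (simp add: power2_eq_square)
  qed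
  have Qa: "Qf (9*d) \<ge> 0"
  proof -
    have "Qf (9*d) = d^2 * (36 - 4*d*(7/2 - d/2)^2 - (1 + 17/2*d - d^2/2)^2)"
      by (simp add: Qf_def e_def field_simps power2_eq_square)
    moreover have "36 - 4*d*(7/2 - d/2)^2 - (1 + 17/2*d - d^2/2)^2 \<ge> 0"
    proof -
      have "(7/2 - d/2)^2 \<le> (7/2)^2" using d0 dsm by (intro power_mono) auto
      moreover have "(7/2::real)^2 = 49/4" by (simp add: power2_eq_square)
      ultimately have h: "(7/2 - d/2)^2 \<le> 49/4" by linarith
      have "d*(7/2 - d/2)^2 \<le> d*(49/4)" using mult_left_mono[OF h, of d] d0 by simp
      then have A: "4*d*(7/2 - d/2)^2 \<le> 49*d" by linarith
      have dd: "d^2 \<le> d/3" using d0 dsm by (simp add: power2_eq_square)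
      have "(1 + 17/2*d - d^2/2)^2 \<le> (1 + 17/2*d)^2" using d0 dsm dd by (intro power_mono) auto
      also have "... = 1 + 17*d + 289/4*d^2" by (simp add: power2_eq_square field_simps)
      finally show ?thesis using A dd dsm d0 by linarith
    qed
    ultimately show ?thesis by simp
  qed
  have Qb: "Qf b \<ge> 0"
  proof -
    have "Qf b = d^2 * ((32 - 32*d) - (5 - 9/2*d + d^2/2)^2)"
      by (simp add: Qf_def e_def b_def field_simps power2_eq_square)
    moreover have "(32 - 32*d) - (5 - 9/2*d + d^2/2)^2 \<ge> 0"
    proof -
      have dd: "d^2 \<le> d/3" using d0 dsm by (simp add: power2_eq_square)
      have "(5 - 9/2*d + d^2/2)^2 \<le> (5 - 4*d)^2" using d0 dsm dd by (intro power_mono) auto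
      also have "... = 25 - 40*d + 16*d^2" by (simp add: power2_eq_square field_simps)
      finally have S: "(5 - 9/2*d + d^2/2)^2 \<le> 25 - 40*d + 16*d^2" .
      have "25 - 40*d + 16*d^2 \<le> (32 - 32*d)" using dd dsm d0 by linarith
      with S show ?thesis by linarith
    qed
    ultimately show ?thesis by simp
  qed
  have bu: "b - u \<ge> 0" and ua': "u - 9*d \<ge> 0" using ub ua b_def by auto
  have "(b - 9*d) * Qf u \<ge> 0" unfolding id using Qa Qb bu ua' d0
    by (intro add_nonneg_nonneg mult_nonneg_nonneg) auto
  then have Qu: "Qf u \<ge> 0" if "b - 9*d > 0" using that by (simp add: zero_le_mult_iff)
  moreover have "Qf u \<ge> 0" if "b - 9*d \<le> 0" using that bu ua' Qa by (smt (verit))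
  ultimately have Qu: "Qf u \<ge> 0" by linarith
  have yy: "y^2 = u - x^2" using xy by simp
  have xe: "x = u/2 - e" using xd e_def by simp
  have "Qf u = 4*d*y^2 - (u*d + e*(1-d))^2" unfolding Qf_def yy xe by simp
  then have "(u*d + e*(1-d))^2 \<le> 4*d*y^2" using Qu by linarith
  also have "... = (2*y* sqrt d)^2" using d0 by (simp add: power_mult_distrib)
  finally have "(u*d + e*(1-d))^2 \<le> (2*y* sqrt d)^2" .
  moreover have nn: "0 \<le> 2*y* sqrt d" using y0 d0 by simp
  ultimately have "u*d + e*(1-d) \<le> 2*y* sqrt d"
    by (rule power2_le_imp_le)
  then have "u*d + e*(1-d) \<le> 2*(y* sqrt d)" by simp
  then show ?thesis unfolding lhs by (smt (verit))
qed

theorem lemma1: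
  fixes Oc P Q :: complex and d :: real
  defines "K \<equiv> sphere Oc 1"
  assumes d_def: "d = infdist P K"
    and d_pos: "0 < d" and d_small: "d < 1/2"
    and QK: "Q \<in> K"
    and orient: "pos_oriented P Oc Q"
  shows "(P \<in> ball Oc 1 \<and> cmod (P - Q) \<ge> 2 * sqrt d \<longrightarrow>
            (\<exists>\<alpha>. 0 < \<alpha> \<and> \<alpha> < pi/2 \<and> sin \<alpha> < 2 * sqrt d \<and>
                 P \<in> rot Q \<alpha> ` K \<and> dist Oc (rot Q \<alpha> Oc) < 4 * sqrt d))
       \<and> (P \<notin> cball Oc 1 \<and> 3 * sqrt d \<le> cmod (P - Q) \<and> cmod (P - Q) \<le> 2 - d \<longrightarrow>
            (\<exists>\<alpha>. 0 < \<alpha> \<and> \<alpha> < pi/2 \<and> sin \<alpha> < 2 * sqrt d \<and>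
                 P \<in> rot Q (-\<alpha>) ` K \<and> dist Oc (rot Q (-\<alpha>) Oc) < 4 * sqrt d))"
proof -
  define w where "w = P - Q"
  define v where "v = Oc - Q"
  define z where "z = cnj w * v"
  define x where "x = Re z"
  define y where "y = Im z"
  define u where "u = cmod w ^ 2"
  define q where "q = sqrt d"
  define r where "r = dist P Oc"
  have q0: "q > 0" using d_pos by (simp add: q_def)
  have qq: "q^2 = d" using d_pos by (simp add: q_def)
  have v1: "cmod v = 1" using QK by (simp add: K_def v_def dist_norm norm_minus_commute)
  have xy: "x^2 + y^2 = u"
  proof -
    have "cmod z = cmod w" using v1 by (simp add: z_def norm_mult)
    moreover have "x^2 + y^2 = cmod z ^ 2" by (simp only: x_def y_def cmod_power2)
    ultimately show ?thesis by (simp add: u_def)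
  qed
  have rx: "r^2 = u + 1 - 2*x"
  proof -
    have "r = cmod (w - v)" by (simp add: r_def w_def v_def dist_norm)
    then show ?thesis using cmod_diff_sq[of w v] v1 by (simp add: u_def x_def z_def)
  qed
  have y0: "y > 0"
  proof -
    have "Im (cnj (Oc - P) * (Q - P)) = y"
      by (simp add: y_def z_def w_def v_def algebra_simps)
    then show ?thesis using orient by (simp add: pos_oriented_def)
  qed
  have key: "cmod (w - cis a * v)^2 = u + 1 - 2*(x*cos a - y* sin a)" for a
  proof -
    have "Re (cnj w * (cis a * v)) = x*cos a - y* sin a"
      by (simp add: x_def y_def z_def algebra_simps)
    moreover have "cmod (cis a * v) = 1" using v1 by (simp add: norm_mult)
    ultimately show ?thesis using cmod_diff_sq[of w "cis a * v"] unfolding u_def by simp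
  qed
  have dr: "d = \<bar>r - 1\<bar>" using d_def infdist_sphere[of P Oc] by (simp add: K_def r_def)
  define a0 where "a0 = 2 * arctan q"
  have sa0: "sin a0 = 2*q/(1+d)" and ca0: "cos a0 = (1-d)/(1+d)"
    using trig_at[of q] qq by (simp_all add: a0_def)
  have a0pos: "0 < a0" using q0 by (simp add: a0_def)
  have a0lt: "a0 < pi/2"
  proof -
    have "q^2 < 1^2" using qq d_small by simp
    then have "q < 1" by (rule power2_less_imp_less) simp
    then have "arctan q < pi/4" by (rule arctan_less_pi4_pos)
    then show ?thesis by (simp add: a0_def)
  qed
  have sin_small: "sin a < 2*q" if "0 \<le> a" "a \<le> a0" for a
  proof -
    have "sin a \<le> sin a0" using that a0lt by (intro sin_monotone_2pi_le) auto
    also have "... < 2*q" using q0 d_pos by (simp add: sa0 field_simps)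
    finally show ?thesis .
  qed
  have dist_small: "dist Oc (rot Q a Oc) < 4*q" if "0 \<le> a" "a \<le> a0" for a
  proof -
    have "cos a0 \<le> cos a" using that a0lt by (intro cos_monotone_0_pi_le) auto
    then have c1: "2 - 2*cos a \<le> 2 - 2*((1-d)/(1+d))" using ca0 by linarith
    have c2: "2 - 2*((1-d)/(1+d)) = 4*d/(1+d)" using d_pos by (simp add: field_simps)
    have dd0: "d*d > 0" using d_pos by simp
    have "16*d*(1+d) = 16*d + 16*(d*d)" by (simp add: algebra_simps)
    then have "4*d < 16*d*(1+d)" using d_pos dd0 by linarith
    then have c3: "4*d/(1+d) < 16*d" using d_pos by (simp add: divide_less_eq)
    have c4: "(4*q)^2 = 16*d" by (simp only: power_mult_distrib qq) simp
    have c5: "dist Oc (rot Q a Oc)^2 = 2 - 2*cos a" using dist_rot[of Oc Q a] v1 by (simp add: v_def)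
    have "dist Oc (rot Q a Oc)^2 < (4*q)^2" using c1 c2 c3 c4 c5 by linarith
    then show ?thesis by (rule power2_less_imp_less) (use q0 in simp)
  qed
  show ?thesis
  proof (intro conjI impI)
    assume A: "P \<in> ball Oc 1 \<and> 2 * sqrt d \<le> cmod (P - Q)"
    have "r < 1" using A by (simp add: r_def dist_commute)
    then have rd: "r = 1 - d" using dr by simp
    have xd: "x = u/2 + (d - d^2/2)" using rx rd by (simp add: power2_eq_square field_simps)
    have "(2*q)^2 \<le> u" using A q0 unfolding u_def w_def q_def[symmetric]
      by (intro power_mono) auto
    moreover have "(2*q)^2 = 4*d" by (simp only: power_mult_distrib qq) simp
    ultimately have u4: "4*d \<le> u" by simp
    define f where "f = (\<lambda>a. u - 2*(x*cos a - y* sin a))"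
    have f0: "f 0 \<le> 0" using xd d_pos d_small by (simp add: f_def power2_eq_square)
    have dne: "1 + d \<noteq> 0" using d_pos by simp
    have e1: "(1+d)*cos a0 = 1-d" using dne by (simp add: ca0)
    have e2: "(1+d) * sin a0 = 2*q" using dne by (simp add: sa0)
    have "(1+d)*f a0 = u*(1+d) - 2*(x*((1+d)*cos a0) - y*((1+d) * sin a0))"
      by (simp add: f_def algebra_simps)
    then have fe: "(1+d)*f a0 = u*(1+d) - 2*(x*(1-d) - y*(2 * q))" unfolding e1 e2 .
    moreover have "u*(1+d) - 2*(x*(1-d) - y*(2 * q)) \<ge> 0"
      using core_i[OF d_pos d_small u4 xd xy y0] unfolding q_def .
    ultimately have "0 \<le> (1+d)*f a0" using fe by simp
    then have fa0: "0 \<le> f a0" using d_pos by (simp add: zero_le_mult_iff)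
    have "continuous_on {0..a0} f" unfolding f_def by (intro continuous_intros)
    then obtain a where a: "0 \<le> a" "a \<le> a0" "f a = 0"
      using IVT'[of f 0 0 a0] f0 fa0 a0pos by auto
    have "a \<noteq> 0" using a(3) xd d_pos d_small by (auto simp: f_def power2_eq_square)
    with a have apos: "0 < a" by simp
    have "cmod (w - cis a * v)^2 = 1" using key[of a] a(3) by (simp add: f_def)
    then have "cmod (w - cis a * v) = 1" using norm_ge_zero[of "w - cis _ * v"] by (smt (verit) power2_eq_1_iff)
    then have "P \<in> rot Q a ` K" unfolding K_def w_def v_def by (rule rot_mem)
    then show "\<exists>\<alpha>. 0 < \<alpha> \<and> \<alpha> < pi/2 \<and> sin \<alpha> < 2 * sqrt d \<and>
                 P \<in> rot Q \<alpha> ` K \<and> dist Oc (rot Q \<alpha> Oc) < 4 * sqrt d"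
      using apos a a0lt sin_small[OF a(1,2)] dist_small[OF a(1,2)]
      by (intro exI[of _ a]) (simp add: q_def)
  next
    assume A: "P \<notin> cball Oc 1 \<and> 3 * sqrt d \<le> cmod (P - Q) \<and> cmod (P - Q) \<le> 2 - d"
    have "r > 1" using A by (simp add: r_def dist_commute)
    then have rd: "r = 1 + d" using dr by simp
    have xd: "x = u/2 - (d + d^2/2)" using rx rd by (simp add: power2_eq_square field_simps)
    have "(3*q)^2 \<le> u" using A q0 unfolding u_def w_def q_def[symmetric]
      by (intro power_mono) auto
    moreover have "(3*q)^2 = 9*d" by (simp only: power_mult_distrib qq) simp
    ultimately have u9: "9*d \<le> u" by simp
    have ub: "u \<le> (2-d)^2" using A unfolding u_def w_def by (intro power_mono) auto
    define f where "f = (\<lambda>a. u - 2*(x*cos a + y* sin a))"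
    have f0: "0 \<le> f 0" using xd d_pos d_small by (simp add: f_def power2_eq_square)
    have dne: "1 + d \<noteq> 0" using d_pos by simp
    have e1: "(1+d)*cos a0 = 1-d" using dne by (simp add: ca0)
    have e2: "(1+d) * sin a0 = 2*q" using dne by (simp add: sa0)
    have "(1+d)*f a0 = u*(1+d) - 2*(x*((1+d)*cos a0) + y*((1+d) * sin a0))"
      by (simp add: f_def algebra_simps)
    then have fe: "(1+d)*f a0 = u*(1+d) - 2*(x*(1-d) + y*(2 * q))" unfolding e1 e2 .
    moreover have "u*(1+d) - 2*(x*(1-d) + y*(2 * q)) \<le> 0"
      using core_ii[OF d_pos d_small u9 ub xd xy y0] unfolding q_def .
    ultimately have "(1+d)*f a0 \<le> 0" using fe by simp
    then have fa0: "f a0 \<le> 0" using d_pos by (simp add: mult_le_0_iff)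
    have "continuous_on {0..a0} f" unfolding f_def by (intro continuous_intros)
    then obtain a where a: "0 \<le> a" "a \<le> a0" "f a = 0"
      using IVT2'[of f a0 0 0] f0 fa0 a0pos by auto
    have f0v: "f 0 = 2*d + d*d" using xd by (simp add: f_def power2_eq_square)
    have "a \<noteq> 0" using a(3) f0v d_pos mult_pos_pos[OF d_pos d_pos] by (smt (verit))
    with a have apos: "0 < a" by simp
    have "cmod (w - cis (-a) * v)^2 = 1" using key[of "-a"] a(3) by (simp add: f_def)
    then have "cmod (w - cis (-a) * v) = 1" using norm_ge_zero[of "w - cis _ * v"] by (smt (verit) power2_eq_1_iff)
    then have "P \<in> rot Q (-a) ` K" unfolding K_def w_def v_def by (rule rot_mem)
    moreover have "dist Oc (rot Q (-a) Oc) = dist Oc (rot Q a Oc)"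
    proof -
      have "dist Oc (rot Q (-a) Oc)^2 = dist Oc (rot Q a Oc)^2"
        using dist_rot[of Oc Q a] dist_rot[of Oc Q "-a"] v1 by (simp add: v_def)
      then show ?thesis by (simp add: power2_eq_iff_nonneg)
    qed
    ultimately show "\<exists>\<alpha>. 0 < \<alpha> \<and> \<alpha> < pi/2 \<and> sin \<alpha> < 2 * sqrt d \<and>
                 P \<in> rot Q (-\<alpha>) ` K \<and> dist Oc (rot Q (-\<alpha>) Oc) < 4 * sqrt d"
      using apos a a0lt sin_small[OF a(1,2)] dist_small[OF a(1,2)]
      by (intro exI[of _ a]) (simp add: q_def)
  qed
qed

end
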